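(* Let $C$ be a Reedy category. The quotient functor $q\colon\int N^{-,+}(C)\to\mathrm{Down}_*(C)$ exhibits $\mathrm{Down}_*(C)$ as the strict 1-localization of $\int N^{-,+}(C)$ at the set $W$ of morphisms of the form $(\sigma,\mathrm{id}_{X\circ\sigma})\colon([m],X\circ\sigma)\to([n],X)$ with $([n],X)$ an object and $\sigma\colon[m]\to[n]$ surjective. That is, $q$ sends every morphism in $W$ to an isomorphism, and every functor $G\colon\int N^{-,+}(C)\to E$ sending all morphisms of $W$ to isomorphisms factors as $G=H\circ q$ for a unique functor $H\colon\mathrm{Down}_*(C)\to E$.
   Context: A Reedy category $(C,C_-,C_+)$: wide subcategories with unique factorization of every morphism as ($C_-$ then $C_+$), membership in $C_\pm$ decidable, and the relation ($x<'y$ iff non-identity $x\to y$ in $C_+$ or non-identity $y\to x$ in $C_-$) well-founded. $\Delta$: finite ordinals $[n]$ and order-preserving maps. $\int N^{-,+}(C)$: objects $([n],X)$ with $X\colon[n]\to C$ a functor sending all morphisms into $C_-$; morphisms $([m],X)\to([n],Y)$ are $(\alpha,\theta)$ with $\alpha\colon[m]\to[n]$ in $\Delta$ and $\theta\colon X\Rightarrow Y\circ\alpha$ with all components in $C_+$; composition $(\beta,\varphi)\circ(\alpha,\theta)=(\beta\alpha,(\varphi\alpha)\circ\theta)$. Order on hom-sets: $(\alpha,\theta)\le(\alpha',\theta')$ iff $\alpha\le\alpha'$ pointwise and $\theta'_i=Y(\alpha(i)\le\alpha'(i))\circ\theta_i$ for all $i$ (compatible with composition). $\mathrm{Down}_*(C)$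 has the same objects as $\int N^{-,+}(C)$ and hom-sets the quotients by the equivalence relation generated by $\le$; $q$ is the identity on objects and the quotient map on morphisms. *)

theory Defs
  imports Main
begin

record ('o, 'm) cat =
  cOb :: "'o set"
  cAr :: "'m set"
  cDom :: "'m \<Rightarrow> 'o"
  cCod :: "'m \<Rightarrow> 'o"
  cId :: "'o \<Rightarrow> 'm"
  cComp :: "'m \<Rightarrow> 'm \<Rightarrow> 'm"   (* cComp C g f = g \<circ> f *)

definition category :: "('o, 'm) cat \<Rightarrow> bool" where
  "category C \<equiv>
     (\<forall>f\<in>cAr C. cDom C f \<in> cOb C \<and> cCod C f \<in> cOb C) \<and>
     (\<forall>a\<in>cOb C. cId C a \<in> cAr C \<and> cDom C (cId C a) = a \<and> cCod C (cId C a) = a) \<and>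
     (\<forall>f\<in>cAr C. \<forall>g\<in>cAr C. cCod C f = cDom C g \<longrightarrow>
        cComp C g f \<in> cAr C \<and> cDom C (cComp C g f) = cDom C f \<and> cCod C (cComp C g f) = cCod C g) \<and>
     (\<forall>f\<in>cAr C. cComp C f (cId C (cDom C f)) = f \<and> cComp C (cId C (cCod C f)) f = f) \<and>
     (\<forall>f\<in>cAr C. \<forall>g\<in>cAr C. \<forall>h\<in>cAr C. cCod C f = cDom C g \<longrightarrow> cCod C g = cDom C h \<longrightarrow>
        cComp C h (cComp C g f) = cComp C (cComp C h g) f)"

definition is_functor ::
  "('o, 'm) cat \<Rightarrow> ('p, 'n) cat \<Rightarrow> ('o \<Rightarrow> 'p) \<Rightarrow> ('m \<Rightarrow> 'n) \<Rightarrow> bool" where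
  "is_functor C D Fo Fm \<equiv>
     (\<forall>a\<in>cOb C. Fo a \<in> cOb D) \<and>
     (\<forall>f\<in>cAr C. Fm f \<in> cAr D \<and> cDom D (Fm f) = Fo (cDom C f) \<and> cCod D (Fm f) = Fo (cCod C f)) \<and>
     (\<forall>a\<in>cOb C. Fm (cId C a) = cId D (Fo a)) \<and>
     (\<forall>f\<in>cAr C. \<forall>g\<in>cAr C. cCod C f = cDom C g \<longrightarrow> Fm (cComp C g f) = cComp D (Fm g) (Fm f))"

definition iso :: "('o, 'm) cat \<Rightarrow> 'm \<Rightarrow> bool" where
  "iso C f \<equiv> f \<in> cAr C \<and>
     (\<exists>g\<in>cAr C. cDom C g = cCod C f \<and> cCod C g = cDom C f \<and>
        cComp C g f = cId C (cDom C f) \<and> cComp C f g = cId C (cCod C f))"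

definition wide_subcat :: "('o, 'm) cat \<Rightarrow> 'm set \<Rightarrow> bool" where
  "wide_subcat C S \<equiv> S \<subseteq> cAr C \<and> (\<forall>a\<in>cOb C. cId C a \<in> S) \<and>
     (\<forall>f\<in>S. \<forall>g\<in>S. cCod C f = cDom C g \<longrightarrow> cComp C g f \<in> S)"

definition reedy_lt :: "('o, 'm) cat \<Rightarrow> 'm set \<Rightarrow> 'm set \<Rightarrow> 'o \<Rightarrow> 'o \<Rightarrow> bool" where
  "reedy_lt C Cm Cp x y \<equiv>
     (\<exists>f\<in>Cp. cDom C f = x \<and> cCod C f = y \<and> f \<noteq> cId C x) \<or>
     (\<exists>f\<in>Cm. cDom C f = y \<and> cCod C f = x \<and> f \<noteq> cId C y)"

definition reedy :: "('o, 'm) cat \<Rightarrow> 'm set \<Rightarrow> 'm set \<Rightarrow> bool" where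
  "reedy C Cm Cp \<equiv> category C \<and> wide_subcat C Cm \<and> wide_subcat C Cp \<and>
     (\<forall>f\<in>cAr C. \<exists>!gh. fst gh \<in> Cm \<and> snd gh \<in> Cp \<and>
         cDom C (fst gh) = cDom C f \<and> cCod C (fst gh) = cDom C (snd gh) \<and>
         cCod C (snd gh) = cCod C f \<and> cComp C (snd gh) (fst gh) = f) \<and>
     wf {(x, y). x \<in> cOb C \<and> y \<in> cOb C \<and> reedy_lt C Cm Cp x y}"

text \<open>A map [m] \<rightarrow> [n] is a function nat \<Rightarrow> nat, made canonical by being undefined outside {0..m}.\<close>

definition delta_map :: "nat \<Rightarrow> nat \<Rightarrow> (nat \<Rightarrow> nat) \<Rightarrow> bool" where
  "delta_map m n \<alpha> \<equiv> (\<forall>i\<le>m. \<alpha> i \<le> n) \<and> (\<forall>i j. i \<le> j \<longrightarrow> j \<le> m \<longrightarrow> \<alpha> i \<le> \<alpha> j) \<and>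
     (\<forall>i>m. \<alpha> i = undefined)"

definition delta_surj :: "nat \<Rightarrow> nat \<Rightarrow> (nat \<Rightarrow> nat) \<Rightarrow> bool" where
  "delta_surj m n \<sigma> \<equiv> delta_map m n \<sigma> \<and> (\<forall>k\<le>n. \<exists>i\<le>m. \<sigma> i = k)"

text \<open>An object ([n], X): X given by objects X_i (i \<le> n) and arrows X(i\<le>j) : X_i \<rightarrow> X_j.\<close>

type_synonym ('o, 'm) nobj = "nat \<times> (nat \<Rightarrow> 'o) \<times> (nat \<Rightarrow> nat \<Rightarrow> 'm)"
type_synonym ('o, 'm) nmor = "('o, 'm) nobj \<times> ('o, 'm) nobj \<times> (nat \<Rightarrow> nat) \<times> (nat \<Rightarrow> 'm)"

definition ndim :: "('o, 'm) nobj \<Rightarrow> nat" where "ndim a = fst a"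
definition nob :: "('o, 'm) nobj \<Rightarrow> nat \<Rightarrow> 'o" where "nob a = fst (snd a)"
definition nar :: "('o, 'm) nobj \<Rightarrow> nat \<Rightarrow> nat \<Rightarrow> 'm" where "nar a = snd (snd a)"

definition mdom :: "('o, 'm) nmor \<Rightarrow> ('o, 'm) nobj" where "mdom f = fst f"
definition mcod :: "('o, 'm) nmor \<Rightarrow> ('o, 'm) nobj" where "mcod f = fst (snd f)"
definition mmap :: "('o, 'm) nmor \<Rightarrow> nat \<Rightarrow> nat" where "mmap f = fst (snd (snd f))"
definition mnat :: "('o, 'm) nmor \<Rightarrow> nat \<Rightarrow> 'm" where "mnat f = snd (snd (snd f))"

definition is_nobj :: "('o, 'm) cat \<Rightarrow> 'm set \<Rightarrow> ('o, 'm) nobj \<Rightarrow> bool" where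
  "is_nobj C Cm a \<equiv>
     (\<forall>i\<le>ndim a. nob a i \<in> cOb C) \<and>
     (\<forall>i j. i \<le> j \<longrightarrow> j \<le> ndim a \<longrightarrow>
        nar a i j \<in> Cm \<and> cDom C (nar a i j) = nob a i \<and> cCod C (nar a i j) = nob a j) \<and>
     (\<forall>i\<le>ndim a. nar a i i = cId C (nob a i)) \<and>
     (\<forall>i j k. i \<le> j \<longrightarrow> j \<le> k \<longrightarrow> k \<le> ndim a \<longrightarrow>
        cComp C (nar a j k) (nar a i j) = nar a i k) \<and>
     (\<forall>i>ndim a. nob a i = undefined) \<and>
     (\<forall>i j. \<not> (i \<le> j \<and> j \<le> ndim a) \<longrightarrow> nar a i j = undefined)"

definition is_nmor :: "('o, 'm) cat \<Rightarrow> 'm set \<Rightarrow> 'm set \<Rightarrow> ('o, 'm) nmor \<Rightarrow> bool" where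
  "is_nmor C Cm Cp f \<equiv>
     is_nobj C Cm (mdom f) \<and> is_nobj C Cm (mcod f) \<and>
     delta_map (ndim (mdom f)) (ndim (mcod f)) (mmap f) \<and>
     (\<forall>i\<le>ndim (mdom f). mnat f i \<in> Cp \<and> cDom C (mnat f i) = nob (mdom f) i \<and>
        cCod C (mnat f i) = nob (mcod f) (mmap f i)) \<and>
     (\<forall>i j. i \<le> j \<longrightarrow> j \<le> ndim (mdom f) \<longrightarrow>
        cComp C (nar (mcod f) (mmap f i) (mmap f j)) (mnat f i) = cComp C (mnat f j) (nar (mdom f) i j)) \<and>
     (\<forall>i>ndim (mdom f). mnat f i = undefined)"

definition intN :: "('o, 'm) cat \<Rightarrow> 'm set \<Rightarrow> 'm set \<Rightarrow> (('o, 'm) nobj, ('o, 'm) nmor) cat" where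
  "intN C Cm Cp = \<lparr>
     cOb = {a. is_nobj C Cm a},
     cAr = {f. is_nmor C Cm Cp f},
     cDom = mdom,
     cCod = mcod,
     cId = (\<lambda>a. (a, a, \<lambda>i. if i \<le> ndim a then i else undefined,
                      \<lambda>i. if i \<le> ndim a then cId C (nob a i) else undefined)),
     cComp = (\<lambda>g f. (mdom f, mcod g,
                      \<lambda>i. if i \<le> ndim (mdom f) then mmap g (mmap f i) else undefined,
                      \<lambda>i. if i \<le> ndim (mdom f) then cComp C (mnat g (mmap f i)) (mnat f i) else undefined)) \<rparr>"

definition nle :: "('o, 'm) cat \<Rightarrow> 'm set \<Rightarrow> 'm set \<Rightarrow> ('o, 'm) nmor \<Rightarrow> ('o, 'm) nmor \<Rightarrow> bool" where
  "nle C Cm Cp f f' \<equiv> is_nmor C Cm Cp f \<and> is_nmor C Cm Cp f' \<and>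
     mdom f = mdom f' \<and> mcod f = mcod f' \<and>
     (\<forall>i\<le>ndim (mdom f). mmap f i \<le> mmap f' i \<and>
        mnat f' i = cComp C (nar (mcod f) (mmap f i) (mmap f' i)) (mnat f i))"

definition nclass :: "('o, 'm) cat \<Rightarrow> 'm set \<Rightarrow> 'm set \<Rightarrow> ('o, 'm) nmor \<Rightarrow> ('o, 'm) nmor set" where
  "nclass C Cm Cp f = {g. equivclp (nle C Cm Cp) f g}"

definition Down :: "('o, 'm) cat \<Rightarrow> 'm set \<Rightarrow> 'm set \<Rightarrow> (('o, 'm) nobj, ('o, 'm) nmor set) cat" where
  "Down C Cm Cp = \<lparr>
     cOb = cOb (intN C Cm Cp),
     cAr = nclass C Cm Cp ` cAr (intN C Cm Cp),
     cDom = (\<lambda>F. mdom (SOME f. f \<in> F)),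
     cCod = (\<lambda>F. mcod (SOME f. f \<in> F)),
     cId = (\<lambda>a. nclass C Cm Cp (cId (intN C Cm Cp) a)),
     cComp = (\<lambda>G F. nclass C Cm Cp (cComp (intN C Cm Cp) (SOME g. g \<in> G) (SOME f. f \<in> F))) \<rparr>"

definition restr_obj :: "('o, 'm) nobj \<Rightarrow> nat \<Rightarrow> (nat \<Rightarrow> nat) \<Rightarrow> ('o, 'm) nobj" where
  "restr_obj a m \<sigma> = (m, \<lambda>i. if i \<le> m then nob a (\<sigma> i) else undefined,
                         \<lambda>i j. if i \<le> j \<and> j \<le> m then nar a (\<sigma> i) (\<sigma> j) else undefined)"

definition Wset :: "('o, 'm) cat \<Rightarrow> 'm set \<Rightarrow> ('o, 'm) nmor set" where
  "Wset C Cm = {(restr_obj a m \<sigma>, a, \<sigma>, \<lambda>i. if i \<le> m then cId C (nob a (\<sigma> i)) else undefined)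
                 | a m \<sigma>. is_nobj C Cm a \<and> delta_surj m (ndim a) \<sigma>}"

end

theory Submission
  imports Defs
begin


lemma cat_dom: "category C \<Longrightarrow> f \<in> cAr C \<Longrightarrow> cDom C f \<in> cOb C"
  unfolding category_def by blast
lemma cat_cod: "category C \<Longrightarrow> f \<in> cAr C \<Longrightarrow> cCod C f \<in> cOb C"
  unfolding category_def by blast
lemma cat_id: "category C \<Longrightarrow> a \<in> cOb C \<Longrightarrow> cId C a \<in> cAr C"
  unfolding category_def by blast
lemma cat_id_dom[simp]: "category C \<Longrightarrow> a \<in> cOb C \<Longrightarrow> cDom C (cId C a) = a"
  unfolding category_def by blast
lemma cat_id_cod[simp]: "category C \<Longrightarrow> a \<in> cOb C \<Longrightarrow> cCod C (cId C a) = a"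
  unfolding category_def by blast
lemma cat_comp: "category C \<Longrightarrow> f \<in> cAr C \<Longrightarrow> g \<in> cAr C \<Longrightarrow> cCod C f = cDom C g \<Longrightarrow> cComp C g f \<in> cAr C"
  unfolding category_def by blast
lemma cat_comp_dom: "category C \<Longrightarrow> f \<in> cAr C \<Longrightarrow> g \<in> cAr C \<Longrightarrow> cCod C f = cDom C g \<Longrightarrow> cDom C (cComp C g f) = cDom C f"
  unfolding category_def by blast
lemma cat_comp_cod: "category C \<Longrightarrow> f \<in> cAr C \<Longrightarrow> g \<in> cAr C \<Longrightarrow> cCod C f = cDom C g \<Longrightarrow> cCod C (cComp C g f) = cCod C g"
  unfolding category_def by blast
lemma cat_idr: "category C \<Longrightarrow> f \<in> cAr C \<Longrightarrow> cDom C f = a \<Longrightarrow> cComp C f (cId C a) = f"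
  unfolding category_def by blast
lemma cat_idl: "category C \<Longrightarrow> f \<in> cAr C \<Longrightarrow> cCod C f = a \<Longrightarrow> cComp C (cId C a) f = f"
  unfolding category_def by blast
lemma cat_assoc: "category C \<Longrightarrow> f \<in> cAr C \<Longrightarrow> g \<in> cAr C \<Longrightarrow> h \<in> cAr C \<Longrightarrow> cCod C f = cDom C g \<Longrightarrow> cCod C g = cDom C h \<Longrightarrow>
   cComp C h (cComp C g f) = cComp C (cComp C h g) f"
  unfolding category_def by blast

lemma tup_simps[simp]: "mdom (a,b,c,d) = a" "mcod (a,b,c,d) = b" "mmap (a,b,c,d) = c" "mnat (a,b,c,d) = d"
  by (simp_all add: mdom_def mcod_def mmap_def mnat_def)
lemma tupo_simps[simp]: "ndim (a,b,c) = a" "nob (a,b,c) = b" "nar (a,b,c) = c"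
  by (simp_all add: ndim_def nob_def nar_def)

lemma intN_simps[simp]:
  "cOb (intN C Cm Cp) = {a. is_nobj C Cm a}"
  "cAr (intN C Cm Cp) = {f. is_nmor C Cm Cp f}"
  "cDom (intN C Cm Cp) = mdom" "cCod (intN C Cm Cp) = mcod"
  by (simp_all add: intN_def)


lemma ncomp_eq: "cComp (intN C Cm Cp) g f = (mdom f, mcod g,
                      \<lambda>i. if i \<le> ndim (mdom f) then mmap g (mmap f i) else undefined,
                      \<lambda>i. if i \<le> ndim (mdom f) then cComp C (mnat g (mmap f i)) (mnat f i) else undefined)"
  by (simp add: intN_def)

lemma nid_eq: "cId (intN C Cm Cp) a = (a, a, \<lambda>i. if i \<le> ndim a then i else undefined,
                      \<lambda>i. if i \<le> ndim a then cId C (nob a i) else undefined)"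
  by (simp add: intN_def)

lemma nobjD:
  assumes "is_nobj C Cm a"
  shows "\<And>i. i \<le> ndim a \<Longrightarrow> nob a i \<in> cOb C"
    "\<And>i j. i \<le> j \<Longrightarrow> j \<le> ndim a \<Longrightarrow> nar a i j \<in> Cm"
    "\<And>i j. i \<le> j \<Longrightarrow> j \<le> ndim a \<Longrightarrow> cDom C (nar a i j) = nob a i"
    "\<And>i j. i \<le> j \<Longrightarrow> j \<le> ndim a \<Longrightarrow> cCod C (nar a i j) = nob a j"
    "\<And>i. i \<le> ndim a \<Longrightarrow> nar a i i = cId C (nob a i)"
    "\<And>i j k. i \<le> j \<Longrightarrow> j \<le> k \<Longrightarrow> k \<le> ndim a \<Longrightarrow> cComp C (nar a j k) (nar a i j) = nar a i k"
  using assms unfolding is_nobj_def by blast+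

lemma nmorD:
  assumes "is_nmor C Cm Cp f"
  shows "is_nobj C Cm (mdom f)" "is_nobj C Cm (mcod f)"
    "\<And>i. i \<le> ndim (mdom f) \<Longrightarrow> mmap f i \<le> ndim (mcod f)"
    "\<And>i j. i \<le> j \<Longrightarrow> j \<le> ndim (mdom f) \<Longrightarrow> mmap f i \<le> mmap f j"
    "\<And>i. i > ndim (mdom f) \<Longrightarrow> mmap f i = undefined"
    "\<And>i. i \<le> ndim (mdom f) \<Longrightarrow> mnat f i \<in> Cp"
    "\<And>i. i \<le> ndim (mdom f) \<Longrightarrow> cDom C (mnat f i) = nob (mdom f) i"
    "\<And>i. i \<le> ndim (mdom f) \<Longrightarrow> cCod C (mnat f i) = nob (mcod f) (mmap f i)"
    "\<And>i j. i \<le> j \<Longrightarrow> j \<le> ndim (mdom f) \<Longrightarrow>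
        cComp C (nar (mcod f) (mmap f i) (mmap f j)) (mnat f i) = cComp C (mnat f j) (nar (mdom f) i j)"
    "\<And>i. i > ndim (mdom f) \<Longrightarrow> mnat f i = undefined"
  using assms unfolding is_nmor_def delta_map_def by blast+

lemma wideD:
  assumes "wide_subcat C S"
  shows "S \<subseteq> cAr C" "\<And>a. a \<in> cOb C \<Longrightarrow> cId C a \<in> S"
    "\<And>f g. f \<in> S \<Longrightarrow> g \<in> S \<Longrightarrow> cCod C f = cDom C g \<Longrightarrow> cComp C g f \<in> S"
  using assms unfolding wide_subcat_def by blast+

lemma comp_nmor:
  assumes cat: "category C" and wm: "wide_subcat C Cm" and wp: "wide_subcat C Cp"
    and f: "is_nmor C Cm Cp f" and g: "is_nmor C Cm Cp g" and fg: "mcod f = mdom g"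
  shows "is_nmor C Cm Cp (cComp (intN C Cm Cp) g f)"
proof -
  note F = nmorD[OF f] and G = nmorD[OF g]
  note X = nobjD[OF F(1)] and Y = nobjD[OF F(2)] and Z = nobjD[OF G(2)]
  have Cp: "Cp \<subseteq> cAr C" and Cm: "Cm \<subseteq> cAr C" using wideD wp wm by auto
  have ff: "\<And>i. i \<le> ndim (mdom f) \<Longrightarrow> mnat f i \<in> cAr C" using F(6) Cp by blast
  have gg: "\<And>i. i \<le> ndim (mdom f) \<Longrightarrow> mnat g (mmap f i) \<in> cAr C" using G(6) Cp F(3) fg by auto
  have cc: "\<And>i. i \<le> ndim (mdom f) \<Longrightarrow> cCod C (mnat f i) = cDom C (mnat g (mmap f i))"
    using F(3,8) G(7) fg by auto
  show ?thesis
    unfolding is_nmor_def ncomp_eq tup_simps delta_map_def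
  proof (intro conjI allI impI)
    show "is_nobj C Cm (mdom f)" "is_nobj C Cm (mcod g)" using F G by auto
  next
    fix i assume i: "i \<le> ndim (mdom f)"
    show "(if i \<le> ndim (mdom f) then mmap g (mmap f i) else undefined) \<le> ndim (mcod g)"
      using i F(3) G(3) fg by auto
    show "(if i \<le> ndim (mdom f) then cComp C (mnat g (mmap f i)) (mnat f i) else undefined) \<in> Cp"
      using i wideD(3)[OF wp] F(6) G(6) F(3) fg cc by auto
    show "cDom C (if i \<le> ndim (mdom f) then cComp C (mnat g (mmap f i)) (mnat f i) else undefined) = nob (mdom f) i"
      using i cat_comp_dom[OF cat ff gg cc] F(7) by auto
    show "cCod C (if i \<le> ndim (mdom f) then cComp C (mnat g (mmap f i)) (mnat f i) else undefined) =
        nob (mcod g) (if i \<le> ndim (mdom f) then mmap g (mmap f i) else undefined)"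
      using i cat_comp_cod[OF cat ff gg cc] G(8) F(3) fg by auto
  next
    fix i j assume ij: "i \<le> j" "j \<le> ndim (mdom f)"
    show "(if i \<le> ndim (mdom f) then mmap g (mmap f i) else undefined) \<le> (if j \<le> ndim (mdom f) then mmap g (mmap f j) else undefined)"
      using ij F(3,4) G(4) fg by auto
    let ?a = "mmap f i" and ?b = "mmap f j"
    have ab: "?a \<le> ?b" "?b \<le> ndim (mdom g)" using ij F(3,4) fg by auto
    have nY: "nar (mdom g) ?a ?b \<in> cAr C" using Y(2) ab Cm fg by auto
    have nX: "nar (mdom f) i j \<in> cAr C" using X(2) ij Cm by auto
    have nZ: "nar (mcod g) (mmap g ?a) (mmap g ?b) \<in> cAr C" using Z(2) ab G(3,4) Cm by (meson le_trans subsetD)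
    have ga: "mnat g ?a \<in> cAr C" and gb: "mnat g ?b \<in> cAr C" using gg ij by auto
    have fa: "mnat f i \<in> cAr C" and fb: "mnat f j \<in> cAr C" using ff ij by auto
    have "cComp C (nar (mcod g) (mmap g ?a) (mmap g ?b)) (cComp C (mnat g ?a) (mnat f i))
        = cComp C (cComp C (nar (mcod g) (mmap g ?a) (mmap g ?b)) (mnat g ?a)) (mnat f i)"
      using cat_assoc[OF cat fa ga nZ] cc ij G(8) Z(3) ab G(3,4) by (metis le_trans)
    also have "\<dots> = cComp C (cComp C (mnat g ?b) (nar (mdom g) ?a ?b)) (mnat f i)"
      using G(9) ab by auto
    also have "\<dots> = cComp C (mnat g ?b) (cComp C (nar (mdom g) ?a ?b) (mnat f i))"
      using cat_assoc[OF cat fa nY gb] cc ij Y(3,4) G(7) ab fg by (metis le_trans)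
    also have "\<dots> = cComp C (mnat g ?b) (cComp C (mnat f j) (nar (mdom f) i j))"
      using F(9) ij fg by auto
    also have "\<dots> = cComp C (cComp C (mnat g ?b) (mnat f j)) (nar (mdom f) i j)"
      using cat_assoc[OF cat nX fb gb] cc ij X(4) F(7) by auto
    finally show "cComp C (nar (mcod g) (if i \<le> ndim (mdom f) then mmap g (mmap f i) else undefined)
            (if j \<le> ndim (mdom f) then mmap g (mmap f j) else undefined))
       (if i \<le> ndim (mdom f) then cComp C (mnat g (mmap f i)) (mnat f i) else undefined) =
      cComp C (if j \<le> ndim (mdom f) then cComp C (mnat g (mmap f j)) (mnat f j) else undefined)
       (nar (mdom f) i j)" using ij by auto
  qed auto
qed





lemma id_nmor:
  assumes cat: "category C" and wm: "wide_subcat C Cm" and wp: "wide_subcat C Cp" and a: "is_nobj C Cm a"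
  shows "is_nmor C Cm Cp (cId (intN C Cm Cp) a)"
proof -
  note X = nobjD[OF a]
  have Cm: "Cm \<subseteq> cAr C" using wideD wm by auto
  show ?thesis unfolding is_nmor_def nid_eq tup_simps delta_map_def
  proof (intro conjI allI impI)
    fix i j assume ij: "i \<le> j" "j \<le> ndim a"
    have n: "nar a i j \<in> cAr C" using X(2) ij Cm by auto
    have "cComp C (nar a i j) (cId C (nob a i)) = nar a i j" using cat_idr[OF cat n] X(3) ij by auto
    moreover have "cComp C (cId C (nob a j)) (nar a i j) = nar a i j" using cat_idl[OF cat n] X(4) ij by auto
    ultimately show "cComp C (nar a (if i \<le> ndim a then i else undefined) (if j \<le> ndim a then j else undefined))
        (if i \<le> ndim a then cId C (nob a i) else undefined) =
       cComp C (if j \<le> ndim a then cId C (nob a j) else undefined) (nar a i j)"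
      using ij by auto
  qed (use a X wideD(2)[OF wp] cat in auto)
qed

lemma restr_nobj:
  assumes a: "is_nobj C Cm a" and s: "delta_map m (ndim a) \<sigma>"
  shows "is_nobj C Cm (restr_obj a m \<sigma>)"
proof -
  note X = nobjD[OF a]
  have s1: "\<And>i. i \<le> m \<Longrightarrow> \<sigma> i \<le> ndim a" and s2: "\<And>i j. i \<le> j \<Longrightarrow> j \<le> m \<Longrightarrow> \<sigma> i \<le> \<sigma> j"
    using s unfolding delta_map_def by auto
  show ?thesis unfolding is_nobj_def restr_obj_def tupo_simps
  proof (intro conjI allI impI)
    fix i j k assume "i \<le> j" "j \<le> k" "k \<le> m"
    then show "cComp C (if j \<le> k \<and> k \<le> m then nar a (\<sigma> j) (\<sigma> k) else undefined)
        (if i \<le> j \<and> j \<le> m then nar a (\<sigma> i) (\<sigma> j) else undefined) =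
       (if i \<le> k \<and> k \<le> m then nar a (\<sigma> i) (\<sigma> k) else undefined)"
      using X(6)[of "\<sigma> i" "\<sigma> j" "\<sigma> k"] s1 s2 by auto
  qed (use X s1 s2 in auto)
qed

lemma nle_post:
  assumes cat: "category C" and wm: "wide_subcat C Cm" and wp: "wide_subcat C Cp"
    and le: "nle C Cm Cp f f'" and g: "is_nmor C Cm Cp g" and fg: "mcod f = mdom g"
  shows "nle C Cm Cp (cComp (intN C Cm Cp) g f) (cComp (intN C Cm Cp) g f')"
proof -
  have f: "is_nmor C Cm Cp f" and f': "is_nmor C Cm Cp f'" and dd: "mdom f = mdom f'" "mcod f = mcod f'"
    and L: "\<And>i. i \<le> ndim (mdom f) \<Longrightarrow> mmap f i \<le> mmap f' i \<and>
        mnat f' i = cComp C (nar (mcod f) (mmap f i) (mmap f' i)) (mnat f i)"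
    using le unfolding nle_def by auto
  note F = nmorD[OF f] and F' = nmorD[OF f'] and G = nmorD[OF g]
  note Y = nobjD[OF F(2)] and Z = nobjD[OF G(2)]
  have Cp: "Cp \<subseteq> cAr C" and Cm: "Cm \<subseteq> cAr C" using wideD wp wm by auto
  show ?thesis unfolding nle_def
  proof (intro conjI allI impI)
    show "is_nmor C Cm Cp (cComp (intN C Cm Cp) g f)" using comp_nmor[OF cat wm wp f g fg] .
    show "is_nmor C Cm Cp (cComp (intN C Cm Cp) g f')" using comp_nmor[OF cat wm wp f' g] fg dd by auto
    show "mdom (cComp (intN C Cm Cp) g f) = mdom (cComp (intN C Cm Cp) g f')"
      "mcod (cComp (intN C Cm Cp) g f) = mcod (cComp (intN C Cm Cp) g f')" using dd by (auto simp: ncomp_eq)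
  next
    fix i assume i: "i \<le> ndim (mdom (cComp (intN C Cm Cp) g f))"
    hence i: "i \<le> ndim (mdom f)" by (simp add: ncomp_eq)
    let ?a = "mmap f i" and ?b = "mmap f' i"
    have ab: "?a \<le> ?b" "?b \<le> ndim (mdom g)" using L i F'(3) dd fg by auto
    show "mmap (cComp (intN C Cm Cp) g f) i \<le> mmap (cComp (intN C Cm Cp) g f') i"
      using i ab G(4) dd by (auto simp: ncomp_eq)
    have nY: "nar (mdom g) ?a ?b \<in> cAr C" using Y(2) ab Cm fg by auto
    have nZ: "nar (mcod g) (mmap g ?a) (mmap g ?b) \<in> cAr C" using Z(2) ab G(3,4) Cm by (meson le_trans subsetD)
    have ga: "mnat g ?a \<in> cAr C" and gb: "mnat g ?b \<in> cAr C" using G(6) Cp ab by auto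
    have fa: "mnat f i \<in> cAr C" using F(6) Cp i by auto
    have "cComp C (mnat g ?b) (mnat f' i) = cComp C (mnat g ?b) (cComp C (nar (mdom g) ?a ?b) (mnat f i))"
      using L i fg by auto
    also have "\<dots> = cComp C (cComp C (mnat g ?b) (nar (mdom g) ?a ?b)) (mnat f i)"
      using cat_assoc[OF cat fa nY gb] i F(8) Y(3,4) G(7) ab fg by auto
    also have "\<dots> = cComp C (cComp C (nar (mcod g) (mmap g ?a) (mmap g ?b)) (mnat g ?a)) (mnat f i)"
      using G(9) ab by auto
    also have "\<dots> = cComp C (nar (mcod g) (mmap g ?a) (mmap g ?b)) (cComp C (mnat g ?a) (mnat f i))"
      using cat_assoc[OF cat fa ga nZ] i F(8) G(7,8) Z(3) ab fg G(3,4) by (metis le_trans)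
    finally show "mnat (cComp (intN C Cm Cp) g f') i =
        cComp C (nar (mcod (cComp (intN C Cm Cp) g f)) (mmap (cComp (intN C Cm Cp) g f) i)
          (mmap (cComp (intN C Cm Cp) g f') i)) (mnat (cComp (intN C Cm Cp) g f) i)"
      using i dd by (simp add: ncomp_eq)
  qed
qed

lemma nle_pre:
  assumes cat: "category C" and wm: "wide_subcat C Cm" and wp: "wide_subcat C Cp"
    and le: "nle C Cm Cp f f'" and h: "is_nmor C Cm Cp h" and hf: "mcod h = mdom f"
  shows "nle C Cm Cp (cComp (intN C Cm Cp) f h) (cComp (intN C Cm Cp) f' h)"
proof -
  have f: "is_nmor C Cm Cp f" and f': "is_nmor C Cm Cp f'" and dd: "mdom f = mdom f'" "mcod f = mcod f'"
    and L: "\<And>i. i \<le> ndim (mdom f) \<Longrightarrow> mmap f i \<le> mmap f' i \<and>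
        mnat f' i = cComp C (nar (mcod f) (mmap f i) (mmap f' i)) (mnat f i)"
    using le unfolding nle_def by auto
  note F = nmorD[OF f] and F' = nmorD[OF f'] and H = nmorD[OF h]
  note Y = nobjD[OF F(2)]
  have Cp: "Cp \<subseteq> cAr C" and Cm: "Cm \<subseteq> cAr C" using wideD wp wm by auto
  show ?thesis unfolding nle_def
  proof (intro conjI allI impI)
    show "is_nmor C Cm Cp (cComp (intN C Cm Cp) f h)" using comp_nmor[OF cat wm wp h f hf] .
    show "is_nmor C Cm Cp (cComp (intN C Cm Cp) f' h)" using comp_nmor[OF cat wm wp h f'] hf dd by auto
    show "mdom (cComp (intN C Cm Cp) f h) = mdom (cComp (intN C Cm Cp) f' h)"
      "mcod (cComp (intN C Cm Cp) f h) = mcod (cComp (intN C Cm Cp) f' h)" using dd by (auto simp: ncomp_eq)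
  next
    fix i assume i: "i \<le> ndim (mdom (cComp (intN C Cm Cp) f h))"
    hence i: "i \<le> ndim (mdom h)" by (simp add: ncomp_eq)
    let ?e = "mmap h i"
    have e: "?e \<le> ndim (mdom f)" using H(3) i hf by auto
    let ?a = "mmap f ?e" and ?b = "mmap f' ?e"
    have ab: "?a \<le> ?b" "?b \<le> ndim (mcod f)" using L e F'(3) dd by auto
    show "mmap (cComp (intN C Cm Cp) f h) i \<le> mmap (cComp (intN C Cm Cp) f' h) i"
      using i ab by (auto simp: ncomp_eq)
    have nY: "nar (mcod f) ?a ?b \<in> cAr C" using Y(2) ab Cm by auto
    have fa: "mnat f ?e \<in> cAr C" using F(6) Cp e by auto
    have ha: "mnat h i \<in> cAr C" using H(6) Cp i by auto
    have "cComp C (mnat f' ?e) (mnat h i) = cComp C (cComp C (nar (mcod f) ?a ?b) (mnat f ?e)) (mnat h i)"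
      using L e by auto
    also have "\<dots> = cComp C (nar (mcod f) ?a ?b) (cComp C (mnat f ?e) (mnat h i))"
      using cat_assoc[OF cat ha fa nY] i H(8) F(7,8) Y(3) ab e hf by auto
    finally show "mnat (cComp (intN C Cm Cp) f' h) i =
        cComp C (nar (mcod (cComp (intN C Cm Cp) f h)) (mmap (cComp (intN C Cm Cp) f h) i)
          (mmap (cComp (intN C Cm Cp) f' h) i)) (mnat (cComp (intN C Cm Cp) f h) i)"
      using i dd by (simp add: ncomp_eq)
  qed
qed




lemma cat_id_id: "category C \<Longrightarrow> a \<in> cOb C \<Longrightarrow> cComp C (cId C a) (cId C a) = cId C a"
  using cat_idl[OF _ cat_id, of C a a] by simp

lemma nle_dc: "nle C Cm Cp f g \<Longrightarrow> mdom f = mdom g \<and> mcod f = mcod g \<and> is_nmor C Cm Cp f \<and> is_nmor C Cm Cp g"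
  unfolding nle_def by auto

lemma eq_dc:
  assumes "equivclp (nle C Cm Cp) f g"
  shows "mdom f = mdom g \<and> mcod f = mcod g"
  using assms by (induction rule: equivclp_induct) (auto dest: nle_dc)

lemma eq_nmor:
  assumes "equivclp (nle C Cm Cp) f g" "is_nmor C Cm Cp f"
  shows "is_nmor C Cm Cp g"
  using assms by (induction rule: equivclp_induct) (auto dest: nle_dc)

lemma eq_post:
  assumes cat: "category C" and wm: "wide_subcat C Cm" and wp: "wide_subcat C Cp"
    and e: "equivclp (nle C Cm Cp) f f'" and g: "is_nmor C Cm Cp g" and fg: "mcod f = mdom g"
  shows "equivclp (nle C Cm Cp) (cComp (intN C Cm Cp) g f) (cComp (intN C Cm Cp) g f')"
proof -
  have "equivclp (nle C Cm Cp) (cComp (intN C Cm Cp) g f) (cComp (intN C Cm Cp) g f') \<and> mcod f' = mcod f"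
    using e
  proof (induction rule: equivclp_induct)
    case base then show ?case by simp
  next
    case (step y z)
    from step(2) have yz: "mcod z = mcod y" using nle_dc[of C Cm Cp y z] nle_dc[of C Cm Cp z y] by auto
    from step(2) have "equivclp (nle C Cm Cp) (cComp (intN C Cm Cp) g y) (cComp (intN C Cm Cp) g z)"
    proof
      have my: "mcod y = mdom g" using step(3) fg by simp
      assume "nle C Cm Cp y z" from nle_post[OF cat wm wp this g my] show ?thesis by (rule r_into_equivclp)
    next
      have my: "mcod z = mdom g" using step(3) fg yz by simp
      assume "nle C Cm Cp z y" from nle_post[OF cat wm wp this g my] show ?thesis by (rule converse_r_into_equivclp)
    qed
    note E = this
    show ?case using equivclp_trans[OF conjunct1[OF step(3)] E] step(3) yz by simp
  qed
  then show ?thesis by simp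
qed

lemma eq_pre:
  assumes cat: "category C" and wm: "wide_subcat C Cm" and wp: "wide_subcat C Cp"
    and e: "equivclp (nle C Cm Cp) f f'" and h: "is_nmor C Cm Cp h" and hf: "mcod h = mdom f"
  shows "equivclp (nle C Cm Cp) (cComp (intN C Cm Cp) f h) (cComp (intN C Cm Cp) f' h)"
proof -
  have "equivclp (nle C Cm Cp) (cComp (intN C Cm Cp) f h) (cComp (intN C Cm Cp) f' h) \<and> mdom f' = mdom f"
    using e
  proof (induction rule: equivclp_induct)
    case base then show ?case by simp
  next
    case (step y z)
    from step(2) have yz: "mdom z = mdom y" using nle_dc[of C Cm Cp y z] nle_dc[of C Cm Cp z y] by auto
    from step(2) have "equivclp (nle C Cm Cp) (cComp (intN C Cm Cp) y h) (cComp (intN C Cm Cp) z h)"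
    proof
      have my: "mcod h = mdom y" using step(3) hf by simp
      assume "nle C Cm Cp y z" from nle_pre[OF cat wm wp this h my] show ?thesis by (rule r_into_equivclp)
    next
      have my: "mcod h = mdom z" using step(3) hf yz by simp
      assume "nle C Cm Cp z y" from nle_pre[OF cat wm wp this h my] show ?thesis by (rule converse_r_into_equivclp)
    qed
    note E = this
    show ?case using equivclp_trans[OF conjunct1[OF step(3)] E] step(3) yz by simp
  qed
  then show ?thesis by simp
qed

lemma eq_resp:
  assumes "\<And>f g. nle C Cm Cp f g \<Longrightarrow> \<Phi> f = \<Phi> g" "equivclp (nle C Cm Cp) a b"
  shows "\<Phi> a = \<Phi> b"
  using assms(2) by (induction rule: equivclp_induct) (auto dest: assms(1))

lemma nclass_self: "f \<in> nclass C Cm Cp f"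
  unfolding nclass_def by simp

lemma nclass_eq: "equivclp (nle C Cm Cp) f g \<Longrightarrow> nclass C Cm Cp f = nclass C Cm Cp g"
  unfolding nclass_def by (auto intro: equivclp_trans equivclp_sym)

lemma some_class: "equivclp (nle C Cm Cp) f (SOME g. g \<in> nclass C Cm Cp f)"
  using someI[of "\<lambda>g. g \<in> nclass C Cm Cp f", OF nclass_self] unfolding nclass_def by simp

lemma Down_dom: "cDom (Down C Cm Cp) (nclass C Cm Cp f) = mdom f"
proof -
  have "mdom (SOME g. g \<in> nclass C Cm Cp f) = mdom f" using eq_dc[OF some_class[of C Cm Cp f]] by simp
  then show ?thesis by (simp add: Down_def)
qed

lemma Down_cod: "cCod (Down C Cm Cp) (nclass C Cm Cp f) = mcod f"
proof -
  have "mcod (SOME g. g \<in> nclass C Cm Cp f) = mcod f" using eq_dc[OF some_class[of C Cm Cp f]] by simp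
  then show ?thesis by (simp add: Down_def)
qed

lemma Down_simps:
  "cOb (Down C Cm Cp) = {a. is_nobj C Cm a}"
  "cAr (Down C Cm Cp) = nclass C Cm Cp ` {f. is_nmor C Cm Cp f}"
  "cId (Down C Cm Cp) a = nclass C Cm Cp (cId (intN C Cm Cp) a)"
  unfolding Down_def by simp_all

lemma Down_comp:
  assumes cat: "category C" and wm: "wide_subcat C Cm" and wp: "wide_subcat C Cp"
    and f: "is_nmor C Cm Cp f" and g: "is_nmor C Cm Cp g" and fg: "mcod f = mdom g"
  shows "cComp (Down C Cm Cp) (nclass C Cm Cp g) (nclass C Cm Cp f) = nclass C Cm Cp (cComp (intN C Cm Cp) g f)"
proof -
  define g0 where "g0 = (SOME h. h \<in> nclass C Cm Cp g)"
  define f0 where "f0 = (SOME h. h \<in> nclass C Cm Cp f)"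
  have eg: "equivclp (nle C Cm Cp) g g0" and ef: "equivclp (nle C Cm Cp) f f0"
    unfolding g0_def f0_def by (rule some_class)+
  have f0: "is_nmor C Cm Cp f0" using eq_nmor[OF ef f] .
  have c0: "mcod f0 = mdom g" using eq_dc[OF ef] fg by simp
  have "equivclp (nle C Cm Cp) (cComp (intN C Cm Cp) g f) (cComp (intN C Cm Cp) g f0)"
    using eq_post[OF cat wm wp ef g fg] .
  also have "equivclp (nle C Cm Cp) (cComp (intN C Cm Cp) g f0) (cComp (intN C Cm Cp) g0 f0)"
    using eq_pre[OF cat wm wp eg f0 c0] .
  finally have "equivclp (nle C Cm Cp) (cComp (intN C Cm Cp) g f) (cComp (intN C Cm Cp) g0 f0)" .
  then show ?thesis unfolding Down_def using g0_def f0_def nclass_eq by (metis cat.select_convs(6))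
qed

lemma functorD:
  assumes "is_functor C D Fo Fm"
  shows "\<And>a. a \<in> cOb C \<Longrightarrow> Fo a \<in> cOb D"
    "\<And>f. f \<in> cAr C \<Longrightarrow> Fm f \<in> cAr D"
    "\<And>f. f \<in> cAr C \<Longrightarrow> cDom D (Fm f) = Fo (cDom C f)"
    "\<And>f. f \<in> cAr C \<Longrightarrow> cCod D (Fm f) = Fo (cCod C f)"
    "\<And>a. a \<in> cOb C \<Longrightarrow> Fm (cId C a) = cId D (Fo a)"
    "\<And>f g. f \<in> cAr C \<Longrightarrow> g \<in> cAr C \<Longrightarrow> cCod C f = cDom C g \<Longrightarrow> Fm (cComp C g f) = cComp D (Fm g) (Fm f)"
  using assms unfolding is_functor_def by blast+

lemma sec_eq:
  assumes catE: "category E" and F: "is_functor (intN C Cm Cp) E Go Gm"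
    and r: "is_nmor C Cm Cp r" and ir: "iso E (Gm r)"
    and e0: "is_nmor C Cm Cp e0" and e1: "is_nmor C Cm Cp e1"
    and c0: "mcod e0 = mdom r" and c1: "mcod e1 = mdom r" and d: "mdom e1 = mdom e0"
    and id0: "cComp (intN C Cm Cp) r e0 = cId (intN C Cm Cp) (mdom e0)"
    and id1: "cComp (intN C Cm Cp) r e1 = cId (intN C Cm Cp) (mdom e0)"
  shows "Gm e0 = Gm e1"
proof -
  note FD = functorD[OF F]
  obtain g where g: "g \<in> cAr E" "cDom E g = cCod E (Gm r)" "cCod E g = cDom E (Gm r)"
    "cComp E g (Gm r) = cId E (cDom E (Gm r))" using ir unfolding iso_def by blast
  have X: "is_nobj C Cm (mdom e0)" using nmorD(1)[OF e0] .
  have Gr: "Gm r \<in> cAr E" using FD(2) r by simp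
  have key: "Gm e = cComp E g (cId E (Go (mdom e0)))"
    if e: "is_nmor C Cm Cp e" and c: "mcod e = mdom r" and de: "mdom e = mdom e0"
      and ide: "cComp (intN C Cm Cp) r e = cId (intN C Cm Cp) (mdom e0)" for e
  proof -
    have Ge: "Gm e \<in> cAr E" using FD(2) e by simp
    have ce: "cCod E (Gm e) = cDom E (Gm r)" using FD(3,4) e r c by simp
    have "Gm e = cComp E (cId E (cDom E (Gm r))) (Gm e)" using cat_idl[OF catE Ge ce] by simp
    also have "\<dots> = cComp E (cComp E g (Gm r)) (Gm e)" using g by simp
    also have "\<dots> = cComp E g (cComp E (Gm r) (Gm e))" using cat_assoc[OF catE Ge Gr g(1) ce] g(2) by simp
    also have "cComp E (Gm r) (Gm e) = Gm (cComp (intN C Cm Cp) r e)" using FD(6) e r c by simp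
    also have "\<dots> = cId E (Go (mdom e0))" using ide FD(5) X by simp
    finally show ?thesis .
  qed
  show ?thesis using key[OF e0 c0 refl id0] key[OF e1 c1 d id1] by simp
qed

definition wmor :: "('o, 'm) cat \<Rightarrow> ('o, 'm) nobj \<Rightarrow> nat \<Rightarrow> (nat \<Rightarrow> nat) \<Rightarrow> ('o, 'm) nmor" where
  "wmor C a m \<sigma> = (restr_obj a m \<sigma>, a, \<sigma>, \<lambda>i. if i \<le> m then cId C (nob a (\<sigma> i)) else undefined)"

definition smor :: "('o, 'm) cat \<Rightarrow> ('o, 'm) nobj \<Rightarrow> nat \<Rightarrow> (nat \<Rightarrow> nat) \<Rightarrow> (nat \<Rightarrow> nat) \<Rightarrow> ('o, 'm) nmor" where
  "smor C a m \<sigma> d = (a, restr_obj a m \<sigma>, d, \<lambda>i. if i \<le> ndim a then cId C (nob a i) else undefined)"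

lemma restr_dim[simp]: "ndim (restr_obj a m \<sigma>) = m"
  by (simp add: restr_obj_def)

lemma restr_nob[simp]: "nob (restr_obj a m \<sigma>) i = (if i \<le> m then nob a (\<sigma> i) else undefined)"
  by (simp add: restr_obj_def)
lemma restr_nar[simp]: "nar (restr_obj a m \<sigma>) i j = (if i \<le> j \<and> j \<le> m then nar a (\<sigma> i) (\<sigma> j) else undefined)"
  by (simp add: restr_obj_def)

lemma Wset_eq: "Wset C Cm = {wmor C a m \<sigma> | a m \<sigma>. is_nobj C Cm a \<and> delta_surj m (ndim a) \<sigma>}"
  unfolding Wset_def wmor_def by simp

lemma wmor_nmor:
  assumes cat: "category C" and wm: "wide_subcat C Cm" and wp: "wide_subcat C Cp"
    and a: "is_nobj C Cm a" and s: "delta_map m (ndim a) \<sigma>"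
  shows "is_nmor C Cm Cp (wmor C a m \<sigma>)"
proof -
  note X = nobjD[OF a]
  have Cm: "Cm \<subseteq> cAr C" using wideD wm by auto
  have s1: "\<And>i. i \<le> m \<Longrightarrow> \<sigma> i \<le> ndim a" and s2: "\<And>i j. i \<le> j \<Longrightarrow> j \<le> m \<Longrightarrow> \<sigma> i \<le> \<sigma> j"
    using s unfolding delta_map_def by auto
  have R: "is_nobj C Cm (restr_obj a m \<sigma>)" using restr_nobj[OF a s] .
  show ?thesis unfolding is_nmor_def wmor_def tup_simps restr_dim
  proof (intro conjI allI impI)
    fix i j assume ij: "i \<le> j" "j \<le> m"
    have n: "nar a (\<sigma> i) (\<sigma> j) \<in> cAr C" using X(2) ij s1 s2 Cm by auto
    have "cComp C (nar a (\<sigma> i) (\<sigma> j)) (cId C (nob a (\<sigma> i))) = nar a (\<sigma> i) (\<sigma> j)"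
      using cat_idr[OF cat n] X(3) ij s1 s2 by auto
    moreover have "cComp C (cId C (nob a (\<sigma> j))) (nar a (\<sigma> i) (\<sigma> j)) = nar a (\<sigma> i) (\<sigma> j)"
      using cat_idl[OF cat n] X(4) ij s1 s2 by auto
    ultimately show "cComp C (nar a (\<sigma> i) (\<sigma> j)) (if i \<le> m then cId C (nob a (\<sigma> i)) else undefined) =
       cComp C (if j \<le> m then cId C (nob a (\<sigma> j)) else undefined) (nar (restr_obj a m \<sigma>) i j)"
      using ij by simp
  next
    fix i assume i: "i \<le> m"
    show "(if i \<le> m then cId C (nob a (\<sigma> i)) else undefined) \<in> Cp" using i s1 X(1) wideD(2)[OF wp] by simp
    show "cDom C (if i \<le> m then cId C (nob a (\<sigma> i)) else undefined) = nob (restr_obj a m \<sigma>) i" using i s1 X(1) cat by simp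
    show "cCod C (if i \<le> m then cId C (nob a (\<sigma> i)) else undefined) = nob a (\<sigma> i)"
      using i X(1) cat s1 by simp
  qed (use a R s in simp_all)
qed

lemma smor_nmor:
  assumes cat: "category C" and wm: "wide_subcat C Cm" and wp: "wide_subcat C Cp"
    and a: "is_nobj C Cm a" and s: "delta_map m (ndim a) \<sigma>" and d: "delta_map (ndim a) m d"
    and sd: "\<And>i. i \<le> ndim a \<Longrightarrow> \<sigma> (d i) = i"
  shows "is_nmor C Cm Cp (smor C a m \<sigma> d)"
proof -
  note X = nobjD[OF a]
  have Cm: "Cm \<subseteq> cAr C" using wideD wm by auto
  have d1: "\<And>i. i \<le> ndim a \<Longrightarrow> d i \<le> m" and d2: "\<And>i j. i \<le> j \<Longrightarrow> j \<le> ndim a \<Longrightarrow> d i \<le> d j"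
    using d unfolding delta_map_def by auto
  have R: "is_nobj C Cm (restr_obj a m \<sigma>)" using restr_nobj[OF a s] .
  show ?thesis unfolding is_nmor_def smor_def tup_simps
  proof (intro conjI allI impI)
    fix i j assume ij: "i \<le> j" "j \<le> ndim a"
    have n: "nar a i j \<in> cAr C" using X(2) ij Cm by auto
    have "cComp C (nar a i j) (cId C (nob a i)) = nar a i j"
      using cat_idr[OF cat n] X(3) ij by auto
    moreover have "cComp C (cId C (nob a j)) (nar a i j) = nar a i j"
      using cat_idl[OF cat n] X(4) ij by auto
    ultimately show "cComp C (nar (restr_obj a m \<sigma>) (d i) (d j)) (if i \<le> ndim a then cId C (nob a i) else undefined) =
       cComp C (if j \<le> ndim a then cId C (nob a j) else undefined) (nar a i j)"
      using ij d1 d2 sd by simp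
  next
    fix i assume i: "i \<le> ndim a"
    show "(if i \<le> ndim a then cId C (nob a i) else undefined) \<in> Cp" using i X(1) wideD(2)[OF wp] by simp
    show "cDom C (if i \<le> ndim a then cId C (nob a i) else undefined) = nob a i" using i X(1) cat by simp
    show "cCod C (if i \<le> ndim a then cId C (nob a i) else undefined) = nob (restr_obj a m \<sigma>) (d i)"
      using i X(1) cat d1 sd by simp
  qed (use a R d in simp_all)
qed

lemma ws_id:
  assumes cat: "category C" and a: "is_nobj C Cm a" and d: "delta_map (ndim a) m d"
    and sd: "\<And>i. i \<le> ndim a \<Longrightarrow> \<sigma> (d i) = i"
  shows "cComp (intN C Cm Cp) (wmor C a m \<sigma>) (smor C a m \<sigma> d) = cId (intN C Cm Cp) a"
proof -
  note X = nobjD[OF a]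
  have d1: "\<And>i. i \<le> ndim a \<Longrightarrow> d i \<le> m" using d unfolding delta_map_def by auto
  have e1: "(\<lambda>i. if i \<le> ndim a then \<sigma> (d i) else undefined) = (\<lambda>i. if i \<le> ndim a then i else undefined)"
    using sd by (intro ext) simp
  have e2: "(\<lambda>i. if i \<le> ndim a then cComp C (if d i \<le> m then cId C (nob a (\<sigma> (d i))) else undefined) (if i \<le> ndim a then cId C (nob a i) else undefined) else undefined)
     = (\<lambda>i. if i \<le> ndim a then cId C (nob a i) else undefined)"
  proof (intro ext)
    fix i show "(if i \<le> ndim a then cComp C (if d i \<le> m then cId C (nob a (\<sigma> (d i))) else undefined) (if i \<le> ndim a then cId C (nob a i) else undefined) else undefined)
     = (if i \<le> ndim a then cId C (nob a i) else undefined)"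
      using sd[of i] d1[of i] cat_id_id[OF cat X(1)[of i]] by simp
  qed
  show ?thesis unfolding ncomp_eq nid_eq wmor_def smor_def tup_simps e1 e2 by (rule refl)
qed




lemma W_iso:
  assumes cat: "category C" and wm: "wide_subcat C Cm" and wp: "wide_subcat C Cp"
    and w: "w \<in> Wset C Cm"
  shows "iso (Down C Cm Cp) (nclass C Cm Cp w)"
proof -
  obtain a m \<sigma> where wd: "w = wmor C a m \<sigma>" and a: "is_nobj C Cm a" and su: "delta_surj m (ndim a) \<sigma>"
    using w unfolding Wset_eq by blast
  note X = nobjD[OF a]
  define n where "n = ndim a"
  have s: "delta_map m (ndim a) \<sigma>" using su unfolding delta_surj_def by simp
  have s1: "\<And>i. i \<le> m \<Longrightarrow> \<sigma> i \<le> n" and s2: "\<And>i j. i \<le> j \<Longrightarrow> j \<le> m \<Longrightarrow> \<sigma> i \<le> \<sigma> j"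
    using s unfolding delta_map_def n_def by auto
  have ex: "\<And>j. j \<le> n \<Longrightarrow> \<exists>i\<le>m. \<sigma> i = j" using su unfolding delta_surj_def n_def by simp
  define \<delta> where "\<delta> = (\<lambda>j. if j \<le> n then (LEAST i. \<sigma> i = j) else undefined)"
  have sd: "\<sigma> (\<delta> j) = j \<and> \<delta> j \<le> m" if j: "j \<le> n" for j
  proof -
    obtain i where i: "i \<le> m" "\<sigma> i = j" using ex[OF j] by blast
    have "\<sigma> (LEAST i. \<sigma> i = j) = j" using LeastI[of "\<lambda>i. \<sigma> i = j", OF i(2)] .
    moreover have "(LEAST i. \<sigma> i = j) \<le> i" using Least_le[of "\<lambda>i. \<sigma> i = j", OF i(2)] .
    ultimately show ?thesis using i j unfolding \<delta>_def by simp
  qed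
  have ds: "\<delta> (\<sigma> i) \<le> i" if i: "i \<le> m" for i
    using Least_le[of "\<lambda>k. \<sigma> k = \<sigma> i" i] s1[OF i] unfolding \<delta>_def by simp
  have dm: "delta_map (ndim a) m \<delta>"
    unfolding delta_map_def n_def[symmetric]
  proof (intro conjI allI impI)
    fix j j' assume jj: "j \<le> j'" "j' \<le> n"
    show "\<delta> j \<le> \<delta> j'"
    proof (rule ccontr)
      assume ne: "\<not> \<delta> j \<le> \<delta> j'"
      have j: "j \<le> n" using jj by simp
      have "\<sigma> (\<delta> j') \<le> \<sigma> (\<delta> j)" using s2[of "\<delta> j'" "\<delta> j"] ne sd[OF j] by simp
      then have "j' \<le> j" using sd[OF j] sd[OF jj(2)] by simp
      then have "j = j'" using jj by simp
      then show False using ne by simp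
    qed
  qed (use sd in \<open>auto simp: \<delta>_def\<close>)
  have sdn: "\<And>i. i \<le> ndim a \<Longrightarrow> \<sigma> (\<delta> i) = i" using sd n_def by simp
  define sm where "sm = smor C a m \<sigma> \<delta>"
  define R where "R = restr_obj a m \<sigma>"
  have smn: "is_nmor C Cm Cp sm" unfolding sm_def using smor_nmor[OF cat wm wp a s dm sdn] .
  have wn: "is_nmor C Cm Cp w" unfolding wd using wmor_nmor[OF cat wm wp a s] .
  have Rn: "is_nobj C Cm R" unfolding R_def using restr_nobj[OF a s] .
  have ws: "cComp (intN C Cm Cp) w sm = cId (intN C Cm Cp) a" unfolding wd sm_def using ws_id[OF cat a dm sdn] .
  have cw: "mcod w = a" "mdom w = R" unfolding wd wmor_def R_def by simp_all
  have cs: "mdom sm = a" "mcod sm = R" unfolding sm_def smor_def R_def by simp_all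
  have sw: "nle C Cm Cp (cComp (intN C Cm Cp) sm w) (cId (intN C Cm Cp) R)"
    unfolding nle_def
  proof (intro conjI allI impI)
    show "is_nmor C Cm Cp (cComp (intN C Cm Cp) sm w)" using comp_nmor[OF cat wm wp wn smn] cw cs by simp
    show "is_nmor C Cm Cp (cId (intN C Cm Cp) R)" using id_nmor[OF cat wm wp Rn] .
    show "mdom (cComp (intN C Cm Cp) sm w) = mdom (cId (intN C Cm Cp) R)"
      "mcod (cComp (intN C Cm Cp) sm w) = mcod (cId (intN C Cm Cp) R)"
      using cw cs by (simp_all add: ncomp_eq nid_eq)
  next
    fix i assume "i \<le> ndim (mdom (cComp (intN C Cm Cp) sm w))"
    then have i: "i \<le> m" using cw by (simp add: ncomp_eq R_def)
    have si: "\<sigma> i \<le> n" using s1 i .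
    have dsi: "\<delta> (\<sigma> i) \<le> i" using ds i .
    have ob: "nob a (\<sigma> i) \<in> cOb C" using X(1) si n_def by simp
    show "mmap (cComp (intN C Cm Cp) sm w) i \<le> mmap (cId (intN C Cm Cp) R) i"
      using i dsi cw by (simp add: ncomp_eq nid_eq wd wmor_def sm_def smor_def R_def)
    have "nar R (\<delta> (\<sigma> i)) i = cId C (nob a (\<sigma> i))"
      using dsi i sd[OF si] X(5) si n_def by (simp add: R_def)
    then show "mnat (cId (intN C Cm Cp) R) i =
         cComp C (nar (mcod (cComp (intN C Cm Cp) sm w)) (mmap (cComp (intN C Cm Cp) sm w) i)
           (mmap (cId (intN C Cm Cp) R) i)) (mnat (cComp (intN C Cm Cp) sm w) i)"
      using i cw cs si n_def sd[OF si] cat_id_id[OF cat ob]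
      by (simp add: ncomp_eq nid_eq wd wmor_def sm_def smor_def R_def)
  qed
  have Dw: "nclass C Cm Cp w \<in> cAr (Down C Cm Cp)" using wn by (simp add: Down_simps)
  have Ds: "nclass C Cm Cp sm \<in> cAr (Down C Cm Cp)" using smn by (simp add: Down_simps)
  have c1: "cComp (Down C Cm Cp) (nclass C Cm Cp sm) (nclass C Cm Cp w) = cId (Down C Cm Cp) R"
    using Down_comp[OF cat wm wp wn smn] cw cs nclass_eq[OF r_into_equivclp[of "nle C Cm Cp", OF sw]]
    by (simp add: Down_simps)
  have c2: "cComp (Down C Cm Cp) (nclass C Cm Cp w) (nclass C Cm Cp sm) = cId (Down C Cm Cp) a"
    using Down_comp[OF cat wm wp smn wn] cw cs ws by (simp add: Down_simps)
  have dd: "cDom (Down C Cm Cp) (nclass C Cm Cp sm) = a" "cCod (Down C Cm Cp) (nclass C Cm Cp sm) = R"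
    "cDom (Down C Cm Cp) (nclass C Cm Cp w) = R" "cCod (Down C Cm Cp) (nclass C Cm Cp w) = a"
    by (simp_all add: Down_dom Down_cod cw cs)
  show ?thesis unfolding iso_def
  proof (intro conjI Dw bexI[OF _ Ds])
  qed (simp_all only: dd c1 c2)
qed




definition cyl_s :: "nat \<Rightarrow> nat \<Rightarrow> nat \<Rightarrow> nat" where
  "cyl_s m k = (\<lambda>i. if i \<le> Suc m then (if i \<le> k then i else i - 1) else undefined)"

definition cyl_H :: "('o, 'm) nmor \<Rightarrow> ('o, 'm) nmor \<Rightarrow> nat \<Rightarrow> ('o, 'm) nmor" where
  "cyl_H f f' k = (restr_obj (mdom f) (Suc (ndim (mdom f))) (cyl_s (ndim (mdom f)) k), mcod f,
     \<lambda>i. if i \<le> Suc (ndim (mdom f)) then (if i \<le> k then mmap f i else mmap f' (i - 1)) else undefined,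
     \<lambda>i. if i \<le> Suc (ndim (mdom f)) then (if i \<le> k then mnat f i else mnat f' (i - 1)) else undefined)"

lemma cyl_s_map: "k \<le> m \<Longrightarrow> delta_surj (Suc m) m (cyl_s m k)"
  unfolding delta_surj_def delta_map_def cyl_s_def
proof (intro conjI allI impI)
  fix j assume "k \<le> m" "j \<le> m"
  then show "\<exists>i\<le>Suc m. (if i \<le> Suc m then if i \<le> k then i else i - 1 else undefined) = j"
  proof (cases "j \<le> k")
    case True then show ?thesis using \<open>k \<le> m\<close> by (intro exI[of _ j]) simp
  next
    case False then show ?thesis using \<open>j \<le> m\<close> by (intro exI[of _ "Suc j"]) simp
  qed
qed auto

lemma cyl_H_nmor:
  assumes cat: "category C" and wm: "wide_subcat C Cm" and wp: "wide_subcat C Cp"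
    and le: "nle C Cm Cp f f'" and k: "k \<le> ndim (mdom f)"
  shows "is_nmor C Cm Cp (cyl_H f f' k)"
proof -
  have f: "is_nmor C Cm Cp f" and f': "is_nmor C Cm Cp f'" and dd: "mdom f' = mdom f" "mcod f' = mcod f"
    and L: "\<And>i. i \<le> ndim (mdom f) \<Longrightarrow> mmap f i \<le> mmap f' i \<and>
        mnat f' i = cComp C (nar (mcod f) (mmap f i) (mmap f' i)) (mnat f i)"
    using le unfolding nle_def by auto
  define m where "m = ndim (mdom f)"
  define X where "X = mdom f"
  define Y where "Y = mcod f"
  define \<alpha> where "\<alpha> = mmap f"
  define \<alpha>' where "\<alpha>' = mmap f'"
  define \<theta> where "\<theta> = mnat f"
  define \<theta>' where "\<theta>' = mnat f'"
  note F = nmorD[OF f, folded m_def, folded X_def Y_def \<alpha>_def \<theta>_def]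
  note F' = nmorD[OF f', unfolded dd, folded m_def, folded X_def Y_def \<alpha>'_def \<theta>'_def]
  have mX: "ndim X = m" unfolding m_def X_def ..
  have L1: "\<And>i. i \<le> m \<Longrightarrow> \<alpha> i \<le> \<alpha>' i" and L2: "\<And>i. i \<le> m \<Longrightarrow> \<theta>' i = cComp C (nar Y (\<alpha> i) (\<alpha>' i)) (\<theta> i)"
    using L unfolding m_def Y_def \<alpha>_def \<alpha>'_def \<theta>_def \<theta>'_def by auto
  note XX = nobjD[OF F(1), unfolded mX] and YY = nobjD[OF F(2)]
  have Cp: "Cp \<subseteq> cAr C" and Cm: "Cm \<subseteq> cAr C" using wideD wp wm by auto
  have k: "k \<le> m" using k m_def by simp
  have sm: "delta_map (Suc m) (ndim X) (cyl_s m k)" using cyl_s_map[OF k] unfolding delta_surj_def m_def X_def by simp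
  have R: "is_nobj C Cm (restr_obj X (Suc m) (cyl_s m k))" using restr_nobj[OF F(1) sm] .
  have H: "cyl_H f f' k = (restr_obj X (Suc m) (cyl_s m k), Y,
     \<lambda>i. if i \<le> Suc m then (if i \<le> k then \<alpha> i else \<alpha>' (i - 1)) else undefined,
     \<lambda>i. if i \<le> Suc m then (if i \<le> k then \<theta> i else \<theta>' (i - 1)) else undefined)"
    unfolding cyl_H_def m_def X_def Y_def \<alpha>_def \<alpha>'_def \<theta>_def \<theta>'_def by simp
  show ?thesis unfolding H is_nmor_def tup_simps restr_dim delta_map_def
  proof (intro conjI allI impI)
    show "is_nobj C Cm (restr_obj X (Suc m) (cyl_s m k))" by (rule R)
    show "is_nobj C Cm Y" by (rule F(2))
  next
    fix i assume i: "i \<le> Suc m"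
    show "(if i \<le> Suc m then if i \<le> k then \<alpha> i else \<alpha>' (i - 1) else undefined) \<le> ndim Y"
      using i k F(3) F'(3) by auto
    show "(if i \<le> Suc m then if i \<le> k then \<theta> i else \<theta>' (i - 1) else undefined) \<in> Cp"
      using i k F(6) F'(6) by auto
    show "cDom C (if i \<le> Suc m then if i \<le> k then \<theta> i else \<theta>' (i - 1) else undefined) =
        nob (restr_obj X (Suc m) (cyl_s m k)) i"
      using i k F(7) F'(7) by (auto simp: cyl_s_def)
    show "cCod C (if i \<le> Suc m then if i \<le> k then \<theta> i else \<theta>' (i - 1) else undefined) =
       nob Y (if i \<le> Suc m then if i \<le> k then \<alpha> i else \<alpha>' (i - 1) else undefined)"
      using i k F(8) F'(8) by auto
  next
    fix i j assume ij: "i \<le> j" "j \<le> Suc m"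
    show "(if i \<le> Suc m then if i \<le> k then \<alpha> i else \<alpha>' (i - 1) else undefined)
        \<le> (if j \<le> Suc m then if j \<le> k then \<alpha> j else \<alpha>' (j - 1) else undefined)"
    proof (cases "j \<le> k")
      case True then show ?thesis using ij k F(4) by auto
    next
      case False
      show ?thesis
      proof (cases "i \<le> k")
        case True
        have "\<alpha> i \<le> \<alpha>' i" using L1 True k by simp
        also have "\<alpha>' i \<le> \<alpha>' (j - 1)" using F'(4) True False ij by simp
        finally show ?thesis using True False ij by simp
      next
        case False2: False
        then show ?thesis using F'(4)[of "i - 1" "j - 1"] ij False by simp
      qed
    qed
    show "cComp C (nar Y (if i \<le> Suc m then if i \<le> k then \<alpha> i else \<alpha>' (i - 1) else undefined)
          (if j \<le> Suc m then if j \<le> k then \<alpha> j else \<alpha>' (j - 1) else undefined))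
        (if i \<le> Suc m then if i \<le> k then \<theta> i else \<theta>' (i - 1) else undefined) =
       cComp C (if j \<le> Suc m then if j \<le> k then \<theta> j else \<theta>' (j - 1) else undefined)
        (nar (restr_obj X (Suc m) (cyl_s m k)) i j)"
    proof (cases "j \<le> k")
      case True then show ?thesis using ij k F(9)[of i j] by (simp add: cyl_s_def)
    next
      case False
      show ?thesis
      proof (cases "i \<le> k")
        case False2: False
        then show ?thesis using ij False F'(9)[of "i - 1" "j - 1"] by (simp add: cyl_s_def)
      next
        case True
        define p where "p = j - 1"
        have p: "i \<le> p" "k \<le> p" "p \<le> m" using True False ij unfolding p_def by auto
        have ip: "i \<le> m" using p by simp
        have a1: "\<alpha> i \<le> \<alpha> p" "\<alpha> p \<le> \<alpha>' p" "\<alpha>' p \<le> ndim Y" using F(4) L1 F'(3) p by auto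
        have tp: "\<theta> p \<in> cAr C" and ti: "\<theta> i \<in> cAr C" using F(6) Cp p ip by auto
        have nx: "nar X i p \<in> cAr C" using XX(2) p Cm by auto
        have ny1: "nar Y (\<alpha> p) (\<alpha>' p) \<in> cAr C" and ny2: "nar Y (\<alpha> i) (\<alpha> p) \<in> cAr C"
          using YY(2) a1 Cm by (auto intro: le_trans)
        have "cComp C (\<theta>' p) (nar X i p) = cComp C (cComp C (nar Y (\<alpha> p) (\<alpha>' p)) (\<theta> p)) (nar X i p)"
          using L2 p by simp
        also have "\<dots> = cComp C (nar Y (\<alpha> p) (\<alpha>' p)) (cComp C (\<theta> p) (nar X i p))"
          using cat_assoc[OF cat nx tp ny1] XX(4) F(7,8) YY(3) p a1 by (auto intro: le_trans)
        also have "cComp C (\<theta> p) (nar X i p) = cComp C (nar Y (\<alpha> i) (\<alpha> p)) (\<theta> i)"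
          using F(9)[of i p] p by simp
        also have "cComp C (nar Y (\<alpha> p) (\<alpha>' p)) (cComp C (nar Y (\<alpha> i) (\<alpha> p)) (\<theta> i))
            = cComp C (cComp C (nar Y (\<alpha> p) (\<alpha>' p)) (nar Y (\<alpha> i) (\<alpha> p))) (\<theta> i)"
          using cat_assoc[OF cat ti ny2 ny1] F(8) YY(3,4) ip a1 by (auto intro: le_trans)
        also have "cComp C (nar Y (\<alpha> p) (\<alpha>' p)) (nar Y (\<alpha> i) (\<alpha> p)) = nar Y (\<alpha> i) (\<alpha>' p)"
          using YY(6) a1 by auto
        finally have eq: "cComp C (\<theta>' p) (nar X i p) = cComp C (nar Y (\<alpha> i) (\<alpha>' p)) (\<theta> i)" .
        have si: "cyl_s m k i = i" "cyl_s m k j = p" using True False ij unfolding cyl_s_def p_def by auto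
        show ?thesis using eq si True False ij p_def by simp
      qed
    qed
  qed simp_all
qed




definition fk :: "('o, 'm) nmor \<Rightarrow> ('o, 'm) nmor \<Rightarrow> nat \<Rightarrow> ('o, 'm) nmor" where
  "fk f f' k = (mdom f, mcod f,
     \<lambda>i. if i \<le> ndim (mdom f) then (if k \<le> i then mmap f' i else mmap f i) else undefined,
     \<lambda>i. if i \<le> ndim (mdom f) then (if k \<le> i then mnat f' i else mnat f i) else undefined)"

definition cyl_d0 :: "nat \<Rightarrow> nat \<Rightarrow> nat \<Rightarrow> nat" where
  "cyl_d0 m k = (\<lambda>i. if i \<le> m then (if i \<le> k then i else Suc i) else undefined)"
definition cyl_d1 :: "nat \<Rightarrow> nat \<Rightarrow> nat \<Rightarrow> nat" where
  "cyl_d1 m k = (\<lambda>i. if i \<le> m then (if i < k then i else Suc i) else undefined)"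

lemma d0_map: "delta_map m (Suc m) (cyl_d0 m k)" "\<And>i. i \<le> m \<Longrightarrow> cyl_s m k (cyl_d0 m k i) = i"
  unfolding delta_map_def cyl_d0_def cyl_s_def by auto
lemma d1_map: "delta_map m (Suc m) (cyl_d1 m k)" "\<And>i. i \<le> m \<Longrightarrow> k \<le> m \<Longrightarrow> cyl_s m k (cyl_d1 m k i) = i"
  unfolding delta_map_def cyl_d1_def cyl_s_def by auto

lemma H_e:
  assumes cat: "category C" and wp: "wide_subcat C Cp" and le: "nle C Cm Cp f f'" and k: "k \<le> ndim (mdom f)"
  shows "cComp (intN C Cm Cp) (cyl_H f f' k) (smor C (mdom f) (Suc (ndim (mdom f))) (cyl_s (ndim (mdom f)) k) (cyl_d0 (ndim (mdom f)) k)) = fk f f' (Suc k)"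
    "cComp (intN C Cm Cp) (cyl_H f f' k) (smor C (mdom f) (Suc (ndim (mdom f))) (cyl_s (ndim (mdom f)) k) (cyl_d1 (ndim (mdom f)) k)) = fk f f' k"
proof -
  have f: "is_nmor C Cm Cp f" and f': "is_nmor C Cm Cp f'" and dd: "mdom f' = mdom f" "mcod f' = mcod f"
    using le unfolding nle_def by auto
  define m where "m = ndim (mdom f)"
  note F = nmorD[OF f, folded m_def] and F' = nmorD[OF f', unfolded dd, folded m_def]
  have Cp: "Cp \<subseteq> cAr C" using wideD(1)[OF wp] .
  have t: "cComp C (mnat f i) (cId C (nob (mdom f) i)) = mnat f i" if "i \<le> m" for i
    using cat_idr[OF cat _ F(7)[OF that]] F(6)[OF that] Cp by auto
  have t': "cComp C (mnat f' i) (cId C (nob (mdom f) i)) = mnat f' i" if "i \<le> m" for i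
    using cat_idr[OF cat _ F'(7)[OF that]] F'(6)[OF that] Cp by auto
  show "cComp (intN C Cm Cp) (cyl_H f f' k) (smor C (mdom f) (Suc (ndim (mdom f))) (cyl_s (ndim (mdom f)) k) (cyl_d0 (ndim (mdom f)) k)) = fk f f' (Suc k)"
    unfolding ncomp_eq cyl_H_def smor_def fk_def tup_simps m_def[symmetric]
    apply (simp only: prod.inject)
    apply (intro conjI refl ext)
    using t t' by (auto simp: cyl_d0_def)
  show "cComp (intN C Cm Cp) (cyl_H f f' k) (smor C (mdom f) (Suc (ndim (mdom f))) (cyl_s (ndim (mdom f)) k) (cyl_d1 (ndim (mdom f)) k)) = fk f f' k"
    unfolding ncomp_eq cyl_H_def smor_def fk_def tup_simps m_def[symmetric]
    apply (simp only: prod.inject)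
    apply (intro conjI refl ext)
    using t t' by (auto simp: cyl_d1_def)
qed


lemma tup_eta: "(mdom f, mcod f, mmap f, mnat f) = f"
  by (simp add: mdom_def mcod_def mmap_def mnat_def)

lemma fk_ends:
  assumes le: "nle C Cm Cp f f'"
  shows "fk f f' (Suc (ndim (mdom f))) = f" "fk f f' 0 = f'"
proof -
  have f: "is_nmor C Cm Cp f" and f': "is_nmor C Cm Cp f'" and dd: "mdom f' = mdom f" "mcod f' = mcod f"
    using le unfolding nle_def by auto
  note F = nmorD[OF f] and F' = nmorD[OF f', unfolded dd]
  have "fk f f' (Suc (ndim (mdom f))) = (mdom f, mcod f, mmap f, mnat f)"
    unfolding fk_def using F(5,10) by (auto intro!: ext)
  then show "fk f f' (Suc (ndim (mdom f))) = f" by (simp add: tup_eta)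
  have "fk f f' 0 = (mdom f', mcod f', mmap f', mnat f')"
    unfolding fk_def dd using F'(5,10) by (auto intro!: ext)
  then show "fk f f' 0 = f'" by (simp add: tup_eta)
qed

lemma G_nle:
  assumes cat: "category C" and wm: "wide_subcat C Cm" and wp: "wide_subcat C Cp"
    and catE: "category E" and F: "is_functor (intN C Cm Cp) E Go Gm"
    and Wi: "\<forall>w\<in>Wset C Cm. iso E (Gm w)" and le: "nle C Cm Cp f f'"
  shows "Gm f = Gm f'"
proof -
  define m where "m = ndim (mdom f)"
  define X where "X = mdom f"
  have f: "is_nmor C Cm Cp f" using le unfolding nle_def by auto
  have Xn: "is_nobj C Cm X" using nmorD(1)[OF f] X_def by simp
  have mX: "ndim X = m" using m_def X_def by simp
  note FD = functorD[OF F]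
  have step: "Gm (fk f f' (Suc k)) = Gm (fk f f' k)" if k: "k \<le> m" for k
  proof -
    define \<sigma> where "\<sigma> = cyl_s m k"
    have su: "delta_surj (Suc m) (ndim X) \<sigma>" using cyl_s_map[OF k] mX \<sigma>_def by simp
    have sm: "delta_map (Suc m) (ndim X) \<sigma>" using su unfolding delta_surj_def by simp
    define r where "r = wmor C X (Suc m) \<sigma>"
    have rW: "r \<in> Wset C Cm" unfolding Wset_eq r_def using Xn su by blast
    have ir: "iso E (Gm r)" using Wi rW by blast
    have rn: "is_nmor C Cm Cp r" unfolding r_def using wmor_nmor[OF cat wm wp Xn sm] .
    define e0 where "e0 = smor C X (Suc m) \<sigma> (cyl_d0 m k)"
    define e1 where "e1 = smor C X (Suc m) \<sigma> (cyl_d1 m k)"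
    have dm0: "delta_map (ndim X) (Suc m) (cyl_d0 m k)" using d0_map(1) mX by simp
    have dm1: "delta_map (ndim X) (Suc m) (cyl_d1 m k)" using d1_map(1) mX by simp
    have sd0: "\<And>i. i \<le> ndim X \<Longrightarrow> \<sigma> (cyl_d0 m k i) = i" using d0_map(2) mX \<sigma>_def by simp
    have sd1: "\<And>i. i \<le> ndim X \<Longrightarrow> \<sigma> (cyl_d1 m k i) = i" using d1_map(2) mX \<sigma>_def k by simp
    have e0n: "is_nmor C Cm Cp e0" unfolding e0_def using smor_nmor[OF cat wm wp Xn sm dm0 sd0] .
    have e1n: "is_nmor C Cm Cp e1" unfolding e1_def using smor_nmor[OF cat wm wp Xn sm dm1 sd1] .
    have ce: "mcod e0 = mdom r" "mcod e1 = mdom r" "mdom e1 = mdom e0" "mdom e0 = X"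
      unfolding e0_def e1_def r_def smor_def wmor_def by simp_all
    have i0: "cComp (intN C Cm Cp) r e0 = cId (intN C Cm Cp) (mdom e0)"
      unfolding r_def e0_def using ws_id[OF cat Xn dm0 sd0] by (simp add: smor_def)
    have i1: "cComp (intN C Cm Cp) r e1 = cId (intN C Cm Cp) (mdom e0)"
      unfolding r_def e1_def using ws_id[OF cat Xn dm1 sd1] by (simp add: smor_def e0_def)
    have ee: "Gm e0 = Gm e1" using sec_eq[OF catE F rn ir e0n e1n ce(1,2,3) i0 i1] .
    define H where "H = cyl_H f f' k"
    have Hn: "is_nmor C Cm Cp H" unfolding H_def using cyl_H_nmor[OF cat wm wp le] k m_def by simp
    have cH: "mdom H = mdom r" unfolding H_def r_def cyl_H_def wmor_def \<sigma>_def m_def X_def by simp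
    have h0: "cComp (intN C Cm Cp) H e0 = fk f f' (Suc k)"
      unfolding H_def e0_def \<sigma>_def X_def m_def using H_e(1)[OF cat wp le] k m_def by simp
    have h1: "cComp (intN C Cm Cp) H e1 = fk f f' k"
      unfolding H_def e1_def \<sigma>_def X_def m_def using H_e(2)[OF cat wp le] k m_def by simp
    have g0: "Gm (cComp (intN C Cm Cp) H e0) = cComp E (Gm H) (Gm e0)"
      by (rule FD(6)) (use e0n Hn ce(1) cH in simp_all)
    have g1: "Gm (cComp (intN C Cm Cp) H e1) = cComp E (Gm H) (Gm e1)"
      by (rule FD(6)) (use e1n Hn ce(2) cH in simp_all)
    show ?thesis using g0 g1 h0 h1 ee by simp
  qed
  have all: "k \<le> Suc m \<Longrightarrow> Gm (fk f f' k) = Gm (fk f f' 0)" for k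
  proof (induction k)
    case 0 show ?case by (rule refl)
  next
    case (Suc k)
    then have k: "k \<le> m" by simp
    have "Gm (fk f f' (Suc k)) = Gm (fk f f' k)" by (rule step[OF k])
    also have "\<dots> = Gm (fk f f' 0)" using Suc.IH k by simp
    finally show ?case .
  qed
  have "Gm (fk f f' (Suc m)) = Gm (fk f f' 0)" by (rule all) simp
  then show ?thesis using fk_ends[OF le] m_def by simp
qed




theorem proposition6p3:
  fixes C :: "('o, 'm) cat" and Cm Cp :: "'m set"
    and E :: "('eo, 'em) cat"
    and Go :: "('o, 'm) nobj \<Rightarrow> 'eo" and Gm :: "('o, 'm) nmor \<Rightarrow> 'em"
  assumes "reedy C Cm Cp"
  shows "(\<forall>w\<in>Wset C Cm. iso (Down C Cm Cp) (nclass C Cm Cp w)) \<and>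
    (category E \<and> is_functor (intN C Cm Cp) E Go Gm \<and> (\<forall>w\<in>Wset C Cm. iso E (Gm w)) \<longrightarrow>
      (\<exists>Ho Hm. is_functor (Down C Cm Cp) E Ho Hm \<and>
         (\<forall>a\<in>cOb (intN C Cm Cp). Go a = Ho a) \<and>
         (\<forall>f\<in>cAr (intN C Cm Cp). Gm f = Hm (nclass C Cm Cp f)) \<and>
         (\<forall>Ho' Hm'. is_functor (Down C Cm Cp) E Ho' Hm' \<and>
            (\<forall>a\<in>cOb (intN C Cm Cp). Go a = Ho' a) \<and>
            (\<forall>f\<in>cAr (intN C Cm Cp). Gm f = Hm' (nclass C Cm Cp f)) \<longrightarrow>
            (\<forall>x\<in>cOb (Down C Cm Cp). Ho' x = Ho x) \<and> (\<forall>F\<in>cAr (Down C Cm Cp). Hm' F = Hm F))))"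
proof -
  have cat: "category C" and wm: "wide_subcat C Cm" and wp: "wide_subcat C Cp"
    using assms unfolding reedy_def by auto
  have P1: "\<forall>w\<in>Wset C Cm. iso (Down C Cm Cp) (nclass C Cm Cp w)"
    using W_iso[OF cat wm wp] by blast
  have P2: "\<exists>Ho Hm. is_functor (Down C Cm Cp) E Ho Hm \<and>
         (\<forall>a\<in>cOb (intN C Cm Cp). Go a = Ho a) \<and>
         (\<forall>f\<in>cAr (intN C Cm Cp). Gm f = Hm (nclass C Cm Cp f)) \<and>
         (\<forall>Ho' Hm'. is_functor (Down C Cm Cp) E Ho' Hm' \<and>
            (\<forall>a\<in>cOb (intN C Cm Cp). Go a = Ho' a) \<and>
            (\<forall>f\<in>cAr (intN C Cm Cp). Gm f = Hm' (nclass C Cm Cp f)) \<longrightarrow>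
            (\<forall>x\<in>cOb (Down C Cm Cp). Ho' x = Ho x) \<and> (\<forall>F\<in>cAr (Down C Cm Cp). Hm' F = Hm F))"
    if catE: "category E" and F: "is_functor (intN C Cm Cp) E Go Gm" and Wi: "\<forall>w\<in>Wset C Cm. iso E (Gm w)"
  proof -
    note FD = functorD[OF F]
    define Hm where "Hm = (\<lambda>F. Gm (SOME f. f \<in> F))"
    have resp: "Gm a = Gm b" if "equivclp (nle C Cm Cp) a b" for a b
      using eq_resp[of C Cm Cp Gm, OF G_nle[OF cat wm wp catE F Wi] that] .
    have Hc: "Hm (nclass C Cm Cp f) = Gm f" for f
      unfolding Hm_def using resp[OF some_class[of C Cm Cp f]] by simp
    have Hfun: "is_functor (Down C Cm Cp) E Go Hm"
      unfolding is_functor_def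
    proof (intro conjI ballI impI)
      fix a assume "a \<in> cOb (Down C Cm Cp)"
      then have a: "is_nobj C Cm a" by (simp add: Down_simps)
      show "Go a \<in> cOb E" using FD(1) a by simp
      show "Hm (cId (Down C Cm Cp) a) = cId E (Go a)" using FD(5) a Hc by (simp add: Down_simps)
    next
      fix Fc assume "Fc \<in> cAr (Down C Cm Cp)"
      then obtain f where f: "is_nmor C Cm Cp f" and Fd: "Fc = nclass C Cm Cp f" by (auto simp: Down_simps)
      show "Hm Fc \<in> cAr E" using FD(2) f Hc Fd by simp
      show "cDom E (Hm Fc) = Go (cDom (Down C Cm Cp) Fc)" using FD(3) f Hc Fd by (simp add: Down_dom)
      show "cCod E (Hm Fc) = Go (cCod (Down C Cm Cp) Fc)" using FD(4) f Hc Fd by (simp add: Down_cod)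
    next
      fix Fc Gc assume "Fc \<in> cAr (Down C Cm Cp)" "Gc \<in> cAr (Down C Cm Cp)"
        and c: "cCod (Down C Cm Cp) Fc = cDom (Down C Cm Cp) Gc"
      then obtain f g where f: "is_nmor C Cm Cp f" and Fd: "Fc = nclass C Cm Cp f"
        and g: "is_nmor C Cm Cp g" and Gd: "Gc = nclass C Cm Cp g" by (auto simp: Down_simps)
      have fg: "mcod f = mdom g" using c Fd Gd by (simp add: Down_dom Down_cod)
      have "cComp (Down C Cm Cp) Gc Fc = nclass C Cm Cp (cComp (intN C Cm Cp) g f)"
        using Down_comp[OF cat wm wp f g fg] Fd Gd by simp
      then have "Hm (cComp (Down C Cm Cp) Gc Fc) = Gm (cComp (intN C Cm Cp) g f)" using Hc by simp
      also have "\<dots> = cComp E (Gm g) (Gm f)" using FD(6) f g fg by simp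
      finally show "Hm (cComp (Down C Cm Cp) Gc Fc) = cComp E (Hm Gc) (Hm Fc)" using Hc Fd Gd by simp
    qed
    show ?thesis
    proof (intro exI conjI allI impI ballI)
      show "is_functor (Down C Cm Cp) E Go Hm" by (rule Hfun)
    next
      fix a show "Go a = Go a" by (rule refl)
    next
      fix f show "Gm f = Hm (nclass C Cm Cp f)" using Hc by simp
    next
      fix Ho' Hm' x
      assume H': "is_functor (Down C Cm Cp) E Ho' Hm' \<and>
            (\<forall>a\<in>cOb (intN C Cm Cp). Go a = Ho' a) \<and>
            (\<forall>f\<in>cAr (intN C Cm Cp). Gm f = Hm' (nclass C Cm Cp f))"
        and x: "x \<in> cOb (Down C Cm Cp)"
      from H' have h2: "\<forall>a\<in>cOb (intN C Cm Cp). Go a = Ho' a" by blast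
      have "x \<in> cOb (intN C Cm Cp)" using x by (simp add: Down_simps)
      then show "Ho' x = Go x" using h2 by metis
    next
      fix Ho' Hm' Fc
      assume H': "is_functor (Down C Cm Cp) E Ho' Hm' \<and>
            (\<forall>a\<in>cOb (intN C Cm Cp). Go a = Ho' a) \<and>
            (\<forall>f\<in>cAr (intN C Cm Cp). Gm f = Hm' (nclass C Cm Cp f))"
        and "Fc \<in> cAr (Down C Cm Cp)"
      then obtain f where f: "is_nmor C Cm Cp f" and Fd: "Fc = nclass C Cm Cp f" by (auto simp: Down_simps)
      from H' have h3: "\<forall>f\<in>cAr (intN C Cm Cp). Gm f = Hm' (nclass C Cm Cp f)" by blast
      have "f \<in> cAr (intN C Cm Cp)" using f by simp
      then have "Hm' Fc = Gm f" using h3 Fd by metis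
      then show "Hm' Fc = Hm Fc" using Fd Hc by simp
    qed
  qed
  show ?thesis using P1 P2 by blast
qed


end
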